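(* Let $G$ be a finite simple graph that is $\mathcal{MC}$-edge connected and satisfies $\mathrm{ann}\,G=0$, and let $\mathcal{N}G$ be its normal graph algebra over a field $\mathbb{F}$ of characteristic not $2$. If $g$ is an edge-scaling automorphism of $\mathcal{N}G$, then $g$ is a scalar automorphism.
   Context: For a finite simple graph $G$ with vertex set $VG$ and edge set $EG$, $\mathcal{N}G=U_G\oplus\mathfrak{Z}_G$ with $U_G$ having basis $VG$ and $\mathfrak{Z}_G$ basis $EG$ (edge with endpoints $x,y$ written $[x,y]$), commutative bilinear product determined by: for distinct vertices $x,y$, $xy=[x,y]$ if adjacent and $0$ otherwise; $x^2=\sum_{y\sim x}[x,y]$; products involving $\mathfrak{Z}_G$ are $0$. $\mathrm{ann}\,G=\{u\in U_G:uU_G=0\}$. An automorphism of $\mathcal{N}G$ is a product-preserving linear bijection $g$ of $\mathcal{N}G$ with $g(U_G)=U_G$ and $g(\mathfrak{Z}_G)=\mathfrak{Z}_G$. It is edge-scaling if $g(\mathfrak{e})\in\langle\mathfrak{e}\rangle$ for every edge $\mathfrak{e}$, and scalar if there is $\alpha\in\mathbb{F}$, $\alpha\neq0$, with $g(u)=\alpha u$ for $u\in U_G$ and $g(\mathfrak{z})=\alpha^2\mathfrak{z}$ for $\mathfrak{z}\in\mathfrak{Z}_G$. A set of distinct edges $\mathfrak{e}_1,\dots,\mathfrak{e}_n$ is coherent if there are scalars $\alpha_i$, not all $0$, such that at each vertex the sum of the $\alpha_i$ over incident $\mathfrak{e}_i$ is $0$; a graph is minimally coherent if its edge set is coherent but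 no proper subset is. $G$ is $\mathcal{MC}$-edge connected if for any two edges $\mathfrak{e},\mathfrak{f}$ there is a sequence $G_1,\dots,G_m$ of minimally coherent subgraphs of $G$ with $\mathfrak{e}\in EG_1$, $\mathfrak{f}\in EG_m$, and $EG_i\cap EG_{i+1}\neq\emptyset$ for $1\le i\le m-1$. *)

theory Defs
  imports Main
begin

definition simple_graph :: "'v set \<Rightarrow> ('v \<Rightarrow> 'v \<Rightarrow> bool) \<Rightarrow> bool" where
  "simple_graph V E \<longleftrightarrow> finite V \<and> (\<forall>x y. E x y \<longrightarrow> x \<in> V \<and> y \<in> V)
     \<and> (\<forall>x y. E x y \<longrightarrow> E y x) \<and> (\<forall>x. \<not> E x x)"

definition edges :: "'v set \<Rightarrow> ('v \<Rightarrow> 'v \<Rightarrow> bool) \<Rightarrow> 'v set set" where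
  "edges V E = {{x, y} | x y. x \<in> V \<and> y \<in> V \<and> E x y}"

text \<open>Elements of NG = U_G (+) Z_G: a pair (u, z) of coefficient functions,
u on the vertex basis, z on the edge basis.\<close>
type_synonym ('v, 'a) ngelem = "('v \<Rightarrow> 'a) \<times> ('v set \<Rightarrow> 'a)"

definition NG_carrier :: "'v set \<Rightarrow> ('v \<Rightarrow> 'v \<Rightarrow> bool) \<Rightarrow> ('v, 'a::field) ngelem set" where
  "NG_carrier V E = {(u, z). (\<forall>x. x \<notin> V \<longrightarrow> u x = 0) \<and> (\<forall>e. e \<notin> edges V E \<longrightarrow> z e = 0)}"

definition ng_zero :: "('v, 'a::field) ngelem" where
  "ng_zero = ((\<lambda>_. 0), (\<lambda>_. 0))"

definition ng_add :: "('v, 'a::field) ngelem \<Rightarrow> ('v, 'a) ngelem \<Rightarrow> ('v, 'a) ngelem" where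
  "ng_add a b = ((\<lambda>x. fst a x + fst b x), (\<lambda>e. snd a e + snd b e))"

definition ng_smul :: "'a::field \<Rightarrow> ('v, 'a) ngelem \<Rightarrow> ('v, 'a) ngelem" where
  "ng_smul c a = ((\<lambda>x. c * fst a x), (\<lambda>e. c * snd a e))"

definition U_part :: "'v set \<Rightarrow> ('v \<Rightarrow> 'v \<Rightarrow> bool) \<Rightarrow> ('v, 'a::field) ngelem set" where
  "U_part V E = {a \<in> NG_carrier V E. snd a = (\<lambda>_. 0)}"

definition Z_part :: "'v set \<Rightarrow> ('v \<Rightarrow> 'v \<Rightarrow> bool) \<Rightarrow> ('v, 'a::field) ngelem set" where
  "Z_part V E = {a \<in> NG_carrier V E. fst a = (\<lambda>_. 0)}"

text \<open>Product of basis vertices x, y (as an element of Z_G, given by its edge coefficients):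
x y = [x,y] if x ~ y (x \<noteq> y), 0 if distinct non-adjacent, x^2 = sum of [x,y] over y ~ x.\<close>
definition vert_prod :: "'v set \<Rightarrow> ('v \<Rightarrow> 'v \<Rightarrow> bool) \<Rightarrow> 'v \<Rightarrow> 'v \<Rightarrow> 'v set \<Rightarrow> 'a::field" where
  "vert_prod V E x y = (\<lambda>e.
     if x = y then (if e \<in> edges V E \<and> x \<in> e then 1 else 0)
     else if E x y \<and> e = {x, y} then 1 else 0)"

text \<open>Bilinear extension; all products involving Z_G vanish.\<close>
definition ng_mult :: "'v set \<Rightarrow> ('v \<Rightarrow> 'v \<Rightarrow> bool) \<Rightarrow> ('v, 'a::field) ngelem \<Rightarrow> ('v, 'a) ngelem \<Rightarrow> ('v, 'a) ngelem" where
  "ng_mult V E a b = ((\<lambda>_. 0),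
     (\<lambda>e. \<Sum>x\<in>V. \<Sum>y\<in>V. fst a x * fst b y * vert_prod V E x y e))"

definition ann :: "'v set \<Rightarrow> ('v \<Rightarrow> 'v \<Rightarrow> bool) \<Rightarrow> ('v, 'a::field) ngelem set" where
  "ann V E = {u \<in> U_part V E. \<forall>v \<in> U_part V E. ng_mult V E u v = ng_zero}"

definition ng_automorphism :: "'v set \<Rightarrow> ('v \<Rightarrow> 'v \<Rightarrow> bool) \<Rightarrow> (('v, 'a::field) ngelem \<Rightarrow> ('v, 'a) ngelem) \<Rightarrow> bool" where
  "ng_automorphism V E g \<longleftrightarrow>
     (\<forall>a \<in> NG_carrier V E. \<forall>b \<in> NG_carrier V E. g (ng_add a b) = ng_add (g a) (g b)) \<and>
     (\<forall>c. \<forall>a \<in> NG_carrier V E. g (ng_smul c a) = ng_smul c (g a)) \<and>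
     bij_betw g (NG_carrier V E) (NG_carrier V E) \<and>
     g ` U_part V E = U_part V E \<and> g ` Z_part V E = Z_part V E \<and>
     (\<forall>a \<in> NG_carrier V E. \<forall>b \<in> NG_carrier V E. g (ng_mult V E a b) = ng_mult V E (g a) (g b))"

definition edge_vec :: "'v set \<Rightarrow> ('v, 'a::field) ngelem" where
  "edge_vec e = ((\<lambda>_. 0), (\<lambda>f. if f = e then 1 else 0))"

definition edge_scaling :: "'v set \<Rightarrow> ('v \<Rightarrow> 'v \<Rightarrow> bool) \<Rightarrow> (('v, 'a::field) ngelem \<Rightarrow> ('v, 'a) ngelem) \<Rightarrow> bool" where
  "edge_scaling V E g \<longleftrightarrow> (\<forall>e \<in> edges V E. \<exists>c. g (edge_vec e) = ng_smul c (edge_vec e))"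

definition scalar_aut :: "'v set \<Rightarrow> ('v \<Rightarrow> 'v \<Rightarrow> bool) \<Rightarrow> (('v, 'a::field) ngelem \<Rightarrow> ('v, 'a) ngelem) \<Rightarrow> bool" where
  "scalar_aut V E g \<longleftrightarrow> (\<exists>\<alpha>. \<alpha> \<noteq> 0 \<and> (\<forall>a \<in> U_part V E. g a = ng_smul \<alpha> a)
                                \<and> (\<forall>a \<in> Z_part V E. g a = ng_smul (\<alpha>^2) a))"

definition coherent :: "'a::field itself \<Rightarrow> 'v set set \<Rightarrow> bool" where
  "coherent T S \<longleftrightarrow> (\<exists>\<alpha> :: 'v set \<Rightarrow> 'a. (\<exists>e \<in> S. \<alpha> e \<noteq> 0) \<and>
       (\<forall>v. (\<Sum>e \<in> {e \<in> S. v \<in> e}. \<alpha> e) = 0))"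

definition minimally_coherent :: "'a::field itself \<Rightarrow> 'v set set \<Rightarrow> bool" where
  "minimally_coherent T S \<longleftrightarrow> coherent T S \<and> (\<forall>S'. S' \<subset> S \<longrightarrow> \<not> coherent T S')"

text \<open>Subgraphs are identified by their edge sets (isolated vertices do not affect
coherence or the chaining condition).\<close>
definition MC_edge_connected :: "'a::field itself \<Rightarrow> 'v set \<Rightarrow> ('v \<Rightarrow> 'v \<Rightarrow> bool) \<Rightarrow> bool" where
  "MC_edge_connected T V E \<longleftrightarrow> (\<forall>e \<in> edges V E. \<forall>f \<in> edges V E. \<exists>Gs :: 'v set set list.
      Gs \<noteq> [] \<and> (\<forall>H \<in> set Gs. H \<subseteq> edges V E \<and> minimally_coherent T H) \<and>
      e \<in> hd Gs \<and> f \<in> last Gs \<and>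
      (\<forall>i. Suc i < length Gs \<longrightarrow> Gs ! i \<inter> Gs ! Suc i \<noteq> {}))"

end

theory Submission
  imports Defs
begin

definition esum :: "'v set \<Rightarrow> ('v \<Rightarrow> 'a::field) \<Rightarrow> 'a" where
  "esum e u = (\<Sum>a\<in>e. u a)"

definition bvec :: "'v \<Rightarrow> ('v, 'a::field) ngelem" where
  "bvec x = ((\<lambda>y. if y = x then 1 else 0), (\<lambda>_. 0))"

lemma edge_shape:
  assumes "simple_graph V E" "e \<in> edges V E"
  shows "\<exists>x y. e = {x, y} \<and> x \<noteq> y \<and> E x y \<and> E y x \<and> x \<in> V \<and> y \<in> V"
  using assms unfolding simple_graph_def edges_def by blast

lemma edge_sub: "simple_graph V E \<Longrightarrow> e \<in> edges V E \<Longrightarrow> e \<subseteq> V \<and> finite e \<and> e \<noteq> {}"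
  using edge_shape by fastforce

lemma finite_edges: "simple_graph V E \<Longrightarrow> finite (edges V E)"
proof -
  assume sg: "simple_graph V E"
  have "edges V E \<subseteq> (\<lambda>(x,y). {x,y}) ` (V \<times> V)" unfolding edges_def by auto
  moreover have "finite V" using sg simple_graph_def by blast
  ultimately show ?thesis by (meson finite_SigmaI finite_imageI finite_subset)
qed

lemma vp_edge:
  assumes "simple_graph V E" "e \<in> edges V E" "a \<in> V" "b \<in> V"
  shows "vert_prod V E a b e = (if a \<in> e \<and> b \<in> e then 1 else 0)"
proof -
  obtain x y where e: "e = {x, y}" "x \<noteq> y" "E x y" "E y x" using edge_shape[OF assms(1,2)] by blast
  show ?thesis using assms(2) e unfolding vert_prod_def by auto
qed

lemma vp_nonedge:
  assumes "e \<notin> edges V E" "a \<in> V" "b \<in> V"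
  shows "vert_prod V E a b e = (0::'a::field)"
  using assms unfolding vert_prod_def edges_def by auto

lemma mult_edge:
  fixes V :: "'v set" and a b :: "('v,'a::field) ngelem"
  assumes "simple_graph V E" "e \<in> edges V E"
  shows "snd (ng_mult V E a b) e = esum e (fst a) * esum e (fst b)"
proof -
  have eV: "e \<subseteq> V" using edge_sub assms by blast
  have "snd (ng_mult V E a b) e = (\<Sum>x\<in>V. \<Sum>y\<in>V. (if x \<in> e then fst a x else 0) * (if y \<in> e then fst b y else 0))"
    unfolding ng_mult_def snd_conv
    by (rule sum.cong[OF refl], rule sum.cong[OF refl]) (simp add: vp_edge[OF assms])
  also have "\<dots> = (\<Sum>x\<in>V. if x \<in> e then fst a x else 0) * (\<Sum>y\<in>V. if y \<in> e then fst b y else 0)"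
    by (simp add: sum_product)
  also have "\<dots> = esum e (fst a) * esum e (fst b)"
  proof -
    have fV: "finite V" using assms(1) simple_graph_def by blast
    have "\<And>f::'v\<Rightarrow>'a. (\<Sum>x\<in>V. if x \<in> e then f x else 0) = sum f e"
      using sum.inter_restrict[OF fV] eV by (metis Int_absorb1 inf_commute)
    thus ?thesis unfolding esum_def by simp
  qed
  finally show ?thesis .
qed

lemma mult_nonedge:
  assumes "e \<notin> edges V E"
  shows "snd (ng_mult V E a b) e = 0"
  unfolding ng_mult_def snd_conv
  by (rule sum.neutral, rule ballI, rule sum.neutral, rule ballI) (simp add: vp_nonedge[OF assms])

lemma mult_fst: "fst (ng_mult V E a b) = (\<lambda>_. 0)"
  unfolding ng_mult_def by simp



lemma esum_alt:
  fixes u :: "'v \<Rightarrow> 'a::field"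
  assumes "finite V" "e \<subseteq> V"
  shows "esum e u = (\<Sum>x\<in>V. if x \<in> e then u x else 0)"
  using sum.inter_restrict[OF assms(1), of u e] assms(2) unfolding esum_def
  by (metis Int_absorb1 inf_commute)

lemma esum_bvec: "finite e \<Longrightarrow> esum e (fst (bvec x :: ('v,'a::field) ngelem)) = (if x \<in> e then 1 else 0)"
  unfolding esum_def bvec_def by simp

lemma drop_coherent:
  fixes \<beta> :: "'v set \<Rightarrow> 'a::field"
  assumes "finite H" "\<forall>v. sum \<beta> {e\<in>H. v\<in>e} = 0" "\<beta> d = 0" "e' \<in> H" "e' \<noteq> d" "\<beta> e' \<noteq> 0"
  shows "coherent TYPE('a) (H - {d})"
  unfolding coherent_def
proof (intro exI conjI allI)
  show "\<exists>e\<in>H - {d}. \<beta> e \<noteq> 0" using assms by blast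
  fix v
  have "sum \<beta> {e \<in> H - {d}. v \<in> e} = sum \<beta> {e\<in>H. v\<in>e}"
    by (rule sum.mono_neutral_left) (use assms in auto)
  thus "sum \<beta> {e \<in> H - {d}. v \<in> e} = 0" using assms(2) by simp
qed

lemma mc_const:
  fixes s :: "'v set \<Rightarrow> 'a::field"
  assumes fin: "finite H" and mc: "minimally_coherent TYPE('a) H"
    and hyp: "\<And>\<beta>::'v set \<Rightarrow> 'a. (\<forall>v. sum \<beta> {e\<in>H. v\<in>e} = 0) \<Longrightarrow> (\<forall>v. sum (\<lambda>e. \<beta> e * s e) {e\<in>H. v\<in>e} = 0)"
  shows "\<exists>c. \<forall>f\<in>H. s f = c"
proof -
  from mc have coh: "coherent TYPE('a) H" and minc: "\<And>S'. S' \<subset> H \<Longrightarrow> \<not> coherent TYPE('a) S'"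
    unfolding minimally_coherent_def by auto
  from coh obtain \<beta> :: "'v set \<Rightarrow> 'a" and e0 where e0: "e0 \<in> H" "\<beta> e0 \<noteq> 0"
    and sums: "\<forall>v. sum \<beta> {e\<in>H. v\<in>e} = 0"
    unfolding coherent_def by blast
  have nz: "\<beta> f \<noteq> 0" if "f \<in> H" for f
  proof
    assume "\<beta> f = 0"
    hence "e0 \<noteq> f" using e0 by auto
    have "coherent TYPE('a) (H - {f})"
      by (rule drop_coherent[OF fin sums \<open>\<beta> f = 0\<close> e0(1) \<open>e0 \<noteq> f\<close> e0(2)])
    moreover have "H - {f} \<subset> H" using that by auto
    ultimately show False using minc by blast
  qed
  define \<delta> where "\<delta> f = \<beta> f * s f - s e0 * \<beta> f" for f
  have dsums: "\<forall>v. sum \<delta> {e\<in>H. v\<in>e} = 0"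
  proof
    fix v
    have "sum \<delta> {e\<in>H. v\<in>e} = sum (\<lambda>e. \<beta> e * s e) {e\<in>H. v\<in>e} - s e0 * sum \<beta> {e\<in>H. v\<in>e}"
      unfolding \<delta>_def by (simp add: sum_subtractf sum_distrib_left)
    thus "sum \<delta> {e\<in>H. v\<in>e} = 0" using hyp[OF sums] sums by simp
  qed
  have "s f = s e0" if "f \<in> H" for f
  proof (rule ccontr)
    assume ne: "s f \<noteq> s e0"
    have "\<delta> f \<noteq> 0" unfolding \<delta>_def using ne nz[OF that]
      by (metis (no_types, opaque_lifting) mult.commute mult_cancel_left right_minus_eq)
    moreover have "\<delta> e0 = 0" unfolding \<delta>_def by (simp add: mult.commute)
    ultimately have "e0 \<noteq> f" by auto
    hence "coherent TYPE('a) (H - {e0})"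
      using drop_coherent[OF fin dsums \<open>\<delta> e0 = 0\<close> that] \<open>\<delta> f \<noteq> 0\<close> by auto
    moreover have "H - {e0} \<subset> H" using e0 by auto
    ultimately show False using minc by blast
  qed
  thus ?thesis by blast
qed

lemma chain_const:
  fixes s :: "'v set \<Rightarrow> 'a"
  assumes "Gs \<noteq> []" "\<forall>H\<in>set Gs. \<exists>c. \<forall>f\<in>H. s f = c"
    "e \<in> hd Gs" "f \<in> last Gs" "\<forall>i. Suc i < length Gs \<longrightarrow> Gs ! i \<inter> Gs ! Suc i \<noteq> {}"
  shows "s f = s e"
proof -
  have "\<forall>x\<in>Gs!i. s x = s e" if "i < length Gs" for i
    using that
  proof (induction i)
    case 0
    obtain c where "\<forall>f\<in>Gs!0. s f = c" using assms(2) 0 by (meson nth_mem)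
    thus ?case using assms(3) hd_conv_nth[OF assms(1)] by metis
  next
    case (Suc i)
    obtain d where d: "d \<in> Gs!i" "d \<in> Gs!Suc i" using assms(5) Suc.prems by blast
    obtain c where c: "\<forall>f\<in>Gs!Suc i. s f = c" using assms(2) Suc.prems by (meson nth_mem)
    have "s d = s e" using Suc d by auto
    thus ?case using c d by metis
  qed
  moreover have "last Gs = Gs ! (length Gs - 1)" using last_conv_nth[OF assms(1)] .
  ultimately show ?thesis using assms(1,4) by (metis diff_less length_greater_0_conv zero_less_one)
qed



definition cc :: "(('v,'a::field) ngelem \<Rightarrow> ('v,'a) ngelem) \<Rightarrow> 'v set \<Rightarrow> 'a" where
  "cc g e = (SOME c. g (edge_vec e) = ng_smul c (edge_vec e))"

definition sv :: "(('v,'a::field) ngelem \<Rightarrow> ('v,'a) ngelem) \<Rightarrow> 'v set \<Rightarrow> 'a" where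
  "sv g e = esum e (fst (g (bvec (SOME x. x \<in> e))))"

context
  fixes V :: "'v set" and E :: "'v \<Rightarrow> 'v \<Rightarrow> bool"
    and g :: "('v, 'a::field) ngelem \<Rightarrow> ('v, 'a) ngelem"
  assumes sg: "simple_graph V E" and aut: "ng_automorphism V E g" and es: "edge_scaling V E g"
begin

lemmas autc = aut[unfolded ng_automorphism_def]

lemma g_add: "a \<in> NG_carrier V E \<Longrightarrow> b \<in> NG_carrier V E \<Longrightarrow> g (ng_add a b) = ng_add (g a) (g b)"
proof -
  have h: "\<forall>a\<in>NG_carrier V E. \<forall>b\<in>NG_carrier V E. g (ng_add a b) = ng_add (g a) (g b)"
    using autc by (elim conjE)
  thus "a \<in> NG_carrier V E \<Longrightarrow> b \<in> NG_carrier V E \<Longrightarrow> g (ng_add a b) = ng_add (g a) (g b)" by simp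
qed
lemma g_smul: "a \<in> NG_carrier V E \<Longrightarrow> g (ng_smul c a) = ng_smul c (g a)"
proof -
  have h: "\<forall>c. \<forall>a\<in>NG_carrier V E. g (ng_smul c a) = ng_smul c (g a)"
    using autc by (elim conjE)
  thus "a \<in> NG_carrier V E \<Longrightarrow> g (ng_smul c a) = ng_smul c (g a)" by simp
qed
lemma g_bij: "bij_betw g (NG_carrier V E) (NG_carrier V E)"
  using autc by (elim conjE)
lemma g_U: "a \<in> U_part V E \<Longrightarrow> g a \<in> U_part V E"
proof -
  have h: "g ` U_part V E = U_part V E" using autc by (elim conjE)
  thus "a \<in> U_part V E \<Longrightarrow> g a \<in> U_part V E" by blast
qed
lemma g_mult: "a \<in> NG_carrier V E \<Longrightarrow> b \<in> NG_carrier V E \<Longrightarrow> g (ng_mult V E a b) = ng_mult V E (g a) (g b)"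
proof -
  have h: "\<forall>a\<in>NG_carrier V E. \<forall>b\<in>NG_carrier V E. g (ng_mult V E a b) = ng_mult V E (g a) (g b)"
    using autc by (elim conjE)
  thus "a \<in> NG_carrier V E \<Longrightarrow> b \<in> NG_carrier V E \<Longrightarrow> g (ng_mult V E a b) = ng_mult V E (g a) (g b)" by simp
qed

lemma zero_carrier: "(ng_zero :: ('v,'a) ngelem) \<in> NG_carrier V E"
  unfolding ng_zero_def NG_carrier_def by simp

lemma g_zero: "g ng_zero = ng_zero"
proof -
  have "ng_smul 0 (ng_zero :: ('v,'a) ngelem) = ng_zero" unfolding ng_smul_def ng_zero_def by simp
  hence "g ng_zero = ng_smul 0 (g ng_zero)" using g_smul[OF zero_carrier, of 0] by simp
  thus ?thesis unfolding ng_smul_def ng_zero_def by simp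
qed

lemma cc_prop: "e \<in> edges V E \<Longrightarrow> g (edge_vec e) = ng_smul (cc g e) (edge_vec e)"
proof -
  assume e: "e \<in> edges V E"
  have "\<exists>c. g (edge_vec e) = ng_smul c (edge_vec e)" using es e unfolding edge_scaling_def by blast
  thus ?thesis unfolding cc_def by (rule someI_ex)
qed

lemma edge_vec_carrier: "e \<in> edges V E \<Longrightarrow> (edge_vec e :: ('v,'a) ngelem) \<in> NG_carrier V E"
  unfolding edge_vec_def NG_carrier_def by auto

lemma cc_nz: "e \<in> edges V E \<Longrightarrow> cc g e \<noteq> 0"
proof
  assume e: "e \<in> edges V E" and c: "cc g e = 0"
  have "g (edge_vec e) = ng_zero" using cc_prop[OF e] c unfolding ng_smul_def ng_zero_def by simp
  hence "g (edge_vec e) = g ng_zero" using g_zero by simp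
  hence "(edge_vec e :: ('v,'a) ngelem) = ng_zero"
    using inj_onD[OF bij_betw_imp_inj_on[OF g_bij] _ edge_vec_carrier[OF e] zero_carrier] by blast
  hence "snd (edge_vec e :: ('v,'a) ngelem) e = snd (ng_zero :: ('v,'a) ngelem) e" by simp
  thus False unfolding edge_vec_def ng_zero_def by simp
qed

lemma zlem_aux:
  assumes "finite F"
  shows "\<forall>a. a \<in> Z_part V E \<and> (\<forall>f. f \<notin> F \<longrightarrow> snd a f = 0) \<longrightarrow> g a = ((\<lambda>_. 0), (\<lambda>f. cc g f * snd a f))"
  using assms
proof (induction F)
  case empty
  show ?case
  proof (intro allI impI)
    fix a :: "('v,'a) ngelem" assume a: "a \<in> Z_part V E \<and> (\<forall>f. f \<notin> {} \<longrightarrow> snd a f = 0)"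
    hence "a = ng_zero" unfolding Z_part_def ng_zero_def by (simp add: prod_eq_iff fun_eq_iff)
    thus "g a = ((\<lambda>_. 0), (\<lambda>f. cc g f * snd a f))" using g_zero unfolding ng_zero_def by simp
  qed
next
  case (insert e F)
  show ?case
  proof (intro allI impI)
    fix a :: "('v,'a) ngelem" assume a: "a \<in> Z_part V E \<and> (\<forall>f. f \<notin> insert e F \<longrightarrow> snd a f = 0)"
    show "g a = ((\<lambda>_. 0), (\<lambda>f. cc g f * snd a f))"
    proof (cases "e \<in> edges V E")
      case False
      hence "snd a e = 0" using a unfolding Z_part_def NG_carrier_def by auto
      hence "\<forall>f. f \<notin> F \<longrightarrow> snd a f = 0" using a by auto
      with a have "a \<in> Z_part V E \<and> (\<forall>f. f \<notin> F \<longrightarrow> snd a f = 0)" by blast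
      thus ?thesis by (rule mp[OF spec[OF insert.IH]])
    next
      case True
      define a' where "a' = (fst a, (snd a)(e := 0))"
      define k where "k = snd a e"
      have a'Z: "a' \<in> Z_part V E" using a unfolding a'_def Z_part_def NG_carrier_def by auto
      have a'F: "\<forall>f. f \<notin> F \<longrightarrow> snd a' f = 0" using a unfolding a'_def by auto
      have ga': "g a' = ((\<lambda>_. 0), (\<lambda>f. cc g f * snd a' f))"
        using a'Z a'F by (intro mp[OF spec[OF insert.IH]] conjI)
      have fa: "fst a = (\<lambda>_. 0)" using a unfolding Z_part_def by blast
      have aeq: "a = ng_add a' (ng_smul k (edge_vec e))"
        unfolding a'_def k_def ng_add_def ng_smul_def edge_vec_def
        by (simp add: prod_eq_iff fun_eq_iff fa)
      have sc: "ng_smul k (edge_vec e) \<in> NG_carrier V E"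
        using True unfolding ng_smul_def edge_vec_def NG_carrier_def by auto
      have a'C: "a' \<in> NG_carrier V E" using a'Z unfolding Z_part_def by blast
      have "g a = g (ng_add a' (ng_smul k (edge_vec e)))" using aeq by (rule arg_cong)
      also have "\<dots> = ng_add (g a') (g (ng_smul k (edge_vec e)))" by (rule g_add[OF a'C sc])
      also have "g (ng_smul k (edge_vec e)) = ng_smul k (g (edge_vec e))"
        by (rule g_smul[OF edge_vec_carrier[OF True]])
      also have "g (edge_vec e) = ng_smul (cc g e) (edge_vec e)" by (rule cc_prop[OF True])
      finally have ga: "g a = ng_add (g a') (ng_smul k (ng_smul (cc g e) (edge_vec e)))" .
      have s1: "snd a' f = (if f = e then 0 else snd a f)" for f unfolding a'_def by simp
      have "ng_add (g a') (ng_smul k (ng_smul (cc g e) (edge_vec e))) = ((\<lambda>_. 0), (\<lambda>f. cc g f * snd a f))"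
        unfolding ga' ng_add_def ng_smul_def edge_vec_def fst_conv snd_conv s1 k_def
        by (rule prod_eqI) (auto simp: fun_eq_iff)
      with ga show ?thesis by simp
    qed
  qed
qed

lemma zlem: "a \<in> Z_part V E \<Longrightarrow> g a = ((\<lambda>_. 0), (\<lambda>f. cc g f * snd a f))"
proof -
  assume a: "a \<in> Z_part V E"
  hence "\<forall>f. f \<notin> edges V E \<longrightarrow> snd a f = 0"
    unfolding Z_part_def NG_carrier_def by (cases a) simp
  with a have "a \<in> Z_part V E \<and> (\<forall>f. f \<notin> edges V E \<longrightarrow> snd a f = 0)" by (rule conjI)
  thus ?thesis by (rule mp[OF spec[OF zlem_aux[OF finite_edges[OF sg]], of a]])
qed

lemma U_carrier: "a \<in> U_part V E \<Longrightarrow> a \<in> NG_carrier V E"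
  unfolding U_part_def by blast

lemma mult_Z: "ng_mult V E a b \<in> Z_part V E"
proof -
  obtain p q where pq: "ng_mult V E a b = (p, q)" by (cases "ng_mult V E a b")
  have p: "p = (\<lambda>_. 0)" using mult_fst[of V E a b] pq by simp
  have q: "\<forall>e. e \<notin> edges V E \<longrightarrow> q e = 0" using mult_nonedge[of _ V E a b] pq by simp
  show ?thesis unfolding Z_part_def NG_carrier_def pq using p q by simp
qed

lemma mult_rel:
  assumes "u \<in> U_part V E" "v \<in> U_part V E" "e \<in> edges V E"
  shows "cc g e * (esum e (fst u) * esum e (fst v)) = esum e (fst (g u)) * esum e (fst (g v))"
proof -
  have "snd (g (ng_mult V E u v)) e = cc g e * snd (ng_mult V E u v) e"
    using zlem[OF mult_Z[of u v]] by simp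
  hence "snd (g (ng_mult V E u v)) e = cc g e * (esum e (fst u) * esum e (fst v))"
    using mult_edge[OF sg assms(3), of u v] by simp
  moreover have "g (ng_mult V E u v) = ng_mult V E (g u) (g v)"
    using g_mult U_carrier assms by blast
  ultimately show ?thesis using mult_edge[OF sg assms(3), of "g u" "g v"] by simp
qed

lemma bvec_U: "x \<in> V \<Longrightarrow> (bvec x :: ('v,'a) ngelem) \<in> U_part V E"
  unfolding bvec_def U_part_def NG_carrier_def by auto


lemma sv_prop:
  assumes e: "e \<in> edges V E"
  shows "sv g e \<noteq> 0 \<and> cc g e = (sv g e)^2 \<and> (\<forall>u \<in> U_part V E. esum e (fst (g u)) = sv g e * esum e (fst u))"
proof -
  have es: "e \<subseteq> V" "finite e" "e \<noteq> {}" using edge_sub[OF sg e] by auto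
  define x where "x = (SOME x. x \<in> e)"
  have xe: "x \<in> e" unfolding x_def using es by (meson ex_in_conv someI_ex)
  hence xV: "x \<in> V" using es by auto
  have b1: "esum e (fst (bvec x :: ('v,'a) ngelem)) = 1" by (simp add: esum_bvec[OF es(2)] xe)
  have sdef: "sv g e = esum e (fst (g (bvec x)))" unfolding sv_def x_def by simp
  have "cc g e * (esum e (fst (bvec x :: ('v,'a) ngelem)) * esum e (fst (bvec x :: ('v,'a) ngelem)))
     = esum e (fst (g (bvec x))) * esum e (fst (g (bvec x)))"
    by (rule mult_rel[OF bvec_U[OF xV] bvec_U[OF xV] e])
  hence c2: "cc g e = (sv g e)^2" unfolding b1 sdef[symmetric] by (simp add: power2_eq_square)
  have snz: "sv g e \<noteq> 0" using c2 cc_nz[OF e] by auto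
  have "esum e (fst (g u)) = sv g e * esum e (fst u)" if u: "u \<in> U_part V E" for u
  proof -
    have "cc g e * (esum e (fst u) * esum e (fst (bvec x :: ('v,'a) ngelem)))
     = esum e (fst (g u)) * esum e (fst (g (bvec x)))"
      by (rule mult_rel[OF u bvec_U[OF xV] e])
    hence "cc g e * esum e (fst u) = esum e (fst (g u)) * sv g e"
      unfolding b1 sdef[symmetric] by simp
    hence "sv g e * (sv g e * esum e (fst u)) = sv g e * esum e (fst (g u))"
      using c2 by (simp add: power2_eq_square algebra_simps)
    thus ?thesis using snz by simp
  qed
  with snz c2 show ?thesis by blast
qed


lemma coh_hyp:
  assumes H: "H \<subseteq> edges V E" and sums: "\<forall>v. sum \<beta> {e\<in>H. v\<in>e} = (0::'a)"
  shows "\<forall>v. sum (\<lambda>e. \<beta> e * sv g e) {e\<in>H. v\<in>e} = 0"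
proof
  fix v
  have finH: "finite H" using H finite_edges[OF sg] finite_subset by blast
  have finV: "finite V" using sg simple_graph_def by blast
  have eV: "e \<subseteq> V" if "e \<in> H" for e using edge_sub[OF sg] H that by blast
  have orth: "(\<Sum>e\<in>H. \<beta> e * esum e u) = 0" for u :: "'v \<Rightarrow> 'a"
  proof -
    have "(\<Sum>e\<in>H. \<beta> e * esum e u) = (\<Sum>e\<in>H. \<Sum>x\<in>V. if x \<in> e then \<beta> e * u x else 0)"
    proof (rule sum.cong[OF refl])
      fix e assume "e \<in> H"
      hence "esum e u = (\<Sum>x\<in>V. if x \<in> e then u x else 0)" using esum_alt[OF finV eV] by blast
      thus "\<beta> e * esum e u = (\<Sum>x\<in>V. if x \<in> e then \<beta> e * u x else 0)"
        by (simp add: sum_distrib_left if_distrib cong: if_cong)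
    qed
    also have "\<dots> = (\<Sum>x\<in>V. \<Sum>e\<in>H. if x \<in> e then \<beta> e * u x else 0)" by (rule sum.swap)
    also have "\<dots> = (\<Sum>x\<in>V. u x * sum \<beta> {e\<in>H. x\<in>e})"
    proof (rule sum.cong[OF refl])
      fix x
      have "sum \<beta> {e\<in>H. x\<in>e} = (\<Sum>e\<in>H. if x \<in> e then \<beta> e else 0)"
        using sum.inter_filter[OF finH] by blast
      thus "(\<Sum>e\<in>H. if x \<in> e then \<beta> e * u x else 0) = u x * sum \<beta> {e\<in>H. x\<in>e}"
        by (simp add: sum_distrib_left mult.commute if_distrib cong: if_cong)
    qed
    also have "\<dots> = 0" using sums by simp
    finally show ?thesis .
  qed
  show "sum (\<lambda>e. \<beta> e * sv g e) {e\<in>H. v\<in>e} = 0"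
  proof (cases "v \<in> V")
    case False
    hence emp: "{e\<in>H. v\<in>e} = {}" using eV by blast
    show ?thesis unfolding emp by (rule sum.empty)
  next
    case True
    have "0 = (\<Sum>e\<in>H. \<beta> e * esum e (fst (g (bvec v))))" using orth by simp
    also have "\<dots> = (\<Sum>e\<in>H. if v \<in> e then \<beta> e * sv g e else 0)"
    proof (rule sum.cong[OF refl])
      fix e assume eH: "e \<in> H"
      hence ee: "e \<in> edges V E" using H by blast
      have "esum e (fst (g (bvec v))) = sv g e * esum e (fst (bvec v :: ('v,'a) ngelem))"
        using sv_prop[OF ee] bvec_U[OF True] by blast
      also have "\<dots> = sv g e * (if v \<in> e then 1 else 0)"
        using esum_bvec edge_sub[OF sg ee] by metis
      finally show "\<beta> e * esum e (fst (g (bvec v))) = (if v \<in> e then \<beta> e * sv g e else 0)"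
        by simp
    qed
    also have "\<dots> = sum (\<lambda>e. \<beta> e * sv g e) {e\<in>H. v\<in>e}"
      using sum.inter_filter[OF finH] by metis
    finally show ?thesis by simp
  qed
qed

lemma sv_const:
  assumes mc: "MC_edge_connected TYPE('a) V E" and e: "e \<in> edges V E" and f: "f \<in> edges V E"
  shows "sv g f = sv g e"
proof -
  obtain Gs :: "'v set set list" where Gs: "Gs \<noteq> []" "\<forall>H \<in> set Gs. H \<subseteq> edges V E \<and> minimally_coherent TYPE('a) H"
      "e \<in> hd Gs" "f \<in> last Gs" "\<forall>i. Suc i < length Gs \<longrightarrow> Gs ! i \<inter> Gs ! Suc i \<noteq> {}"
    using mc e f unfolding MC_edge_connected_def by blast
  have "\<forall>H\<in>set Gs. \<exists>c. \<forall>f\<in>H. sv g f = c"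
  proof
    fix H assume "H \<in> set Gs"
    hence H: "H \<subseteq> edges V E" "minimally_coherent TYPE('a) H" using Gs(2) by auto
    have finH: "finite H" using H finite_edges[OF sg] finite_subset by blast
    show "\<exists>c. \<forall>f\<in>H. sv g f = c"
      by (rule mc_const[OF finH H(2)]) (rule coh_hyp[OF H(1)])
  qed
  thus ?thesis using chain_const[OF Gs(1) _ Gs(3) Gs(4) Gs(5)] by blast
qed

lemma main_ctx:
  assumes mc: "MC_edge_connected TYPE('a) V E" and an: "ann V E = {ng_zero :: ('v, 'a) ngelem}"
  shows "scalar_aut V E g"
proof -
  define \<alpha> where "\<alpha> = (if edges V E = {} then 1 else sv g (SOME e. e \<in> edges V E))"
  have ha: "sv g e = \<alpha>" if "e \<in> edges V E" for e
  proof -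
    have "(SOME e. e \<in> edges V E) \<in> edges V E" using that by (meson someI_ex)
    thus ?thesis unfolding \<alpha>_def using sv_const[OF mc _ that] that by auto
  qed
  have anz: "\<alpha> \<noteq> 0"
  proof (cases "edges V E = {}")
    case True thus ?thesis unfolding \<alpha>_def by simp
  next
    case False
    then obtain e where "e \<in> edges V E" by blast
    thus ?thesis using ha sv_prop by metis
  qed
  have U: "g u = ng_smul \<alpha> u" if u: "u \<in> U_part V E" for u
  proof -
    have gu: "g u \<in> U_part V E" using g_U[OF u] .
    define d :: "('v,'a) ngelem" where "d = ((\<lambda>x. fst (g u) x - \<alpha> * fst u x), (\<lambda>_. 0))"
    have dU: "d \<in> U_part V E" using u gu unfolding d_def U_part_def NG_carrier_def by auto
    have "ng_mult V E d v = ng_zero" if v: "v \<in> U_part V E" for v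
    proof -
      have "snd (ng_mult V E d v) f = 0" for f
      proof (cases "f \<in> edges V E")
        case False thus ?thesis using mult_nonedge by metis
      next
        case True
        have "esum f (fst d) = esum f (fst (g u)) - \<alpha> * esum f (fst u)"
          unfolding d_def esum_def by (simp add: sum_subtractf sum_distrib_left)
        also have "\<dots> = 0" using sv_prop[OF True] u ha[OF True] by simp
        finally show ?thesis unfolding mult_edge[OF sg True, of d v] by simp
      qed
      thus ?thesis using mult_fst unfolding ng_zero_def by (simp add: prod_eq_iff fun_eq_iff)
    qed
    hence "d \<in> ann V E" using dU unfolding ann_def by blast
    hence "d = ng_zero" using an by blast
    hence "\<forall>x. fst (g u) x = \<alpha> * fst u x" unfolding d_def ng_zero_def by (simp add: fun_eq_iff)
    moreover have "snd (g u) = (\<lambda>_. 0)" "snd u = (\<lambda>_. 0)" using u gu unfolding U_part_def by auto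
    ultimately show ?thesis unfolding ng_smul_def by (simp add: prod_eq_iff fun_eq_iff)
  qed
  have Z: "g a = ng_smul (\<alpha>^2) a" if a: "a \<in> Z_part V E" for a
  proof -
    have fa: "fst a = (\<lambda>_. 0)" using a unfolding Z_part_def by blast
    have "cc g f * snd a f = \<alpha>^2 * snd a f" for f
    proof (cases "f \<in> edges V E")
      case True thus ?thesis using sv_prop[OF True] ha[OF True] by simp
    next
      case False hence "snd a f = 0" using a unfolding Z_part_def NG_carrier_def by (cases a) auto
      thus ?thesis by simp
    qed
    thus ?thesis using zlem[OF a] fa unfolding ng_smul_def by (simp add: prod_eq_iff fun_eq_iff)
  qed
  show ?thesis unfolding scalar_aut_def using anz U Z by blast
qed

end


theorem proposition9p2:
  fixes V :: "'v set" and E :: "'v \<Rightarrow> 'v \<Rightarrow> bool"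
    and g :: "('v, 'a::field) ngelem \<Rightarrow> ('v, 'a) ngelem"
  assumes "simple_graph V E"
    and "(2::'a) \<noteq> 0"
    and "MC_edge_connected TYPE('a) V E"
    and "ann V E = {ng_zero :: ('v, 'a) ngelem}"
    and "ng_automorphism V E g"
    and "edge_scaling V E g"
  shows "scalar_aut V E g"
  by (rule main_ctx[OF assms(1) assms(5) assms(6) assms(3) assms(4)])

end
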